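(* Let $(G,c,(k_i)_{i=1}^t)$ be an instance of \textsc{$\mathbb{T}$-Fair Feedback Vertex Set} and let $n_i=c_i(V(G))$. Let $G'$ be the graph with $V(G')=V(G)\cup\{v_0\}$ and $E(G')=E(G)\cup E_0$, where $v_0\notin V(G)$ and $E_0=\{vv_0 : v\in V(G)\}$. Let $c':V(G')\to 2^{[t]}\setminus\{\emptyset\}$ be given by $c'(v_0)=[t]$ and $c'(v)=c(v)$ for $v\in V(G)$. Then $G$ has a $(k_i)_{i=1}^t$-fair feedback vertex set if and only if there exists a pair $(X,X_0)$ such that (a) $X\subseteq V(G)\cup\{v_0\}$ with $v_0\in X$ and $X_0\subseteq E_0$; (b) the subgraph of $G'$ with vertex set $X$ and edge set $E_{G'}[X\setminus\{v_0\}]\cup X_0$ is connected; (c) $|E_{G'}[X\setminus\{v_0\}]\cup X_0|=|X|-1$; and (d) $c'_i(X)=n_i-k_i+1$ for every $i\in[t]$.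
   Context: $[t]=\{1,\dots,t\}$. A $t$-coloured graph is $(G,c)$ with $c:V(G)\to 2^{[t]}\setminus\{\emptyset\}$; for $S$ a vertex set, $c_i(S)=|\{v\in S: i\in c(v)\}|$ (similarly $c'_i$ for $c'$). A set $F\subseteq V(G)$ is a $(k_i)_{i=1}^t$-fair feedback vertex set if $G-F$ is acyclic and $c_i(F)=k_i$ for every $i$. For $Y\subseteq V(G')$, $E_{G'}[Y]$ denotes the set of edges of $G'$ with both endpoints in $Y$. *)

theory Defs
  imports Main
begin

definition simple_graph :: "'a set \<Rightarrow> 'a set set \<Rightarrow> bool" where
  "simple_graph V E \<longleftrightarrow> finite V \<and> (\<forall>e\<in>E. \<exists>u v. u \<noteq> v \<and> u \<in> V \<and> v \<in> V \<and> e = {u, v})"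

definition is_cycle :: "'a set set \<Rightarrow> 'a list \<Rightarrow> bool" where
  "is_cycle E xs \<longleftrightarrow> length xs \<ge> 3 \<and> distinct xs \<and>
     (\<forall>i < length xs. {xs ! i, xs ! ((i + 1) mod length xs)} \<in> E)"

definition is_forest :: "'a set \<Rightarrow> 'a set set \<Rightarrow> bool" where
  "is_forest V E \<longleftrightarrow> \<not> (\<exists>xs. set xs \<subseteq> V \<and> is_cycle E xs)"

definition induced_edges :: "'a set set \<Rightarrow> 'a set \<Rightarrow> 'a set set" where
  "induced_edges E Y = {e \<in> E. e \<subseteq> Y}"

definition graph_connected :: "'a set \<Rightarrow> 'a set set \<Rightarrow> bool" where
  "graph_connected V E \<longleftrightarrow> (\<forall>u\<in>V. \<forall>v\<in>V. (u, v) \<in> {(x, y). {x, y} \<in> E}\<^sup>*)"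

definition t_colouring :: "'a set \<Rightarrow> nat \<Rightarrow> ('a \<Rightarrow> nat set) \<Rightarrow> bool" where
  "t_colouring V t c \<longleftrightarrow> (\<forall>v\<in>V. c v \<subseteq> {1..t} \<and> c v \<noteq> {})"

definition ccount :: "('a \<Rightarrow> nat set) \<Rightarrow> nat \<Rightarrow> 'a set \<Rightarrow> nat" where
  "ccount c i S = card {v \<in> S. i \<in> c v}"

definition fair_fvs :: "'a set \<Rightarrow> 'a set set \<Rightarrow> ('a \<Rightarrow> nat set) \<Rightarrow> nat \<Rightarrow> (nat \<Rightarrow> nat) \<Rightarrow> 'a set \<Rightarrow> bool" where
  "fair_fvs V E c t k F \<longleftrightarrow> F \<subseteq> V \<and> is_forest (V - F) (induced_edges E (V - F)) \<and>
     (\<forall>i\<in>{1..t}. ccount c i F = k i)"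

end

theory Submission
  imports Defs
begin


definition rel :: "'a set set \<Rightarrow> ('a \<times> 'a) set" where
  "rel H = {(x, y). {x, y} \<in> H}"

definition walk :: "'a set set \<Rightarrow> 'a list \<Rightarrow> bool" where
  "walk H xs \<longleftrightarrow> (\<forall>j. Suc j < length xs \<longrightarrow> {xs ! j, xs ! Suc j} \<in> H)"

definition edges_in :: "'a set \<Rightarrow> 'a set set \<Rightarrow> bool" where
  "edges_in W H \<longleftrightarrow> (\<forall>e\<in>H. \<exists>a b. a \<noteq> b \<and> a \<in> W \<and> b \<in> W \<and> e = {a, b})"

definition hub :: "'a \<Rightarrow> 'a set \<Rightarrow> 'a set set" where
  "hub v0 W = (\<lambda>w. {w, v0}) ` W"

definition acyc :: "'a set set \<Rightarrow> bool" where
  "acyc H \<longleftrightarrow> (\<forall>xs. \<not> is_cycle H xs)"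

lemma rel_sym: "(x, y) \<in> (rel H)\<^sup>* \<Longrightarrow> (y, x) \<in> (rel H)\<^sup>*"
proof -
  assume a: "(x, y) \<in> (rel H)\<^sup>*"
  have "sym (rel H)" by (auto simp: sym_def rel_def insert_commute)
  then have "sym ((rel H)\<^sup>*)" by (rule sym_rtrancl)
  thus ?thesis using a by (meson symD)
qed

lemma rel_mono: "H \<subseteq> H' \<Longrightarrow> (x, y) \<in> (rel H)\<^sup>* \<Longrightarrow> (x, y) \<in> (rel H')\<^sup>*"
proof -
  assume "H \<subseteq> H'" "(x, y) \<in> (rel H)\<^sup>*"
  moreover have "rel H \<subseteq> rel H'" using \<open>H \<subseteq> H'\<close> unfolding rel_def by auto
  ultimately show ?thesis using rtrancl_mono by blast
qed

lemma rel_edge: "{x, y} \<in> H \<Longrightarrow> (x, y) \<in> (rel H)\<^sup>*"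
  by (auto simp: rel_def)

lemma distinct_walk:
  assumes "(u, v) \<in> (rel H)\<^sup>*"
  shows "\<exists>xs. xs \<noteq> [] \<and> hd xs = u \<and> last xs = v \<and> distinct xs \<and> walk H xs"
  using assms
proof (induction rule: rtrancl_induct)
  case base thus ?case by (intro exI[of _ "[u]"]) (auto simp: walk_def)
next
  case (step y z)
  then obtain xs where xs: "xs \<noteq> []" "hd xs = u" "last xs = y" "distinct xs" "walk H xs" by blast
  have yz: "{y, z} \<in> H" using step.hyps(2) by (simp add: rel_def)
  show ?case
  proof (cases "z \<in> set xs")
    case True
    then obtain ys zs where sp: "xs = ys @ z # zs" by (meson split_list)
    define l where "l = ys @ [z]"
    have lt: "l = take (Suc (length ys)) xs" using sp l_def by simp
    have "walk H l" unfolding walk_def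
    proof (intro allI impI)
      fix j assume "Suc j < length l"
      then have "Suc j < length xs" "Suc j < Suc (length ys)" using sp l_def by auto
      then show "{l ! j, l ! Suc j} \<in> H" using xs(5) unfolding walk_def lt by simp
    qed
    moreover have "hd l = u" using xs(2) sp l_def by (cases ys) auto
    moreover have "distinct l" using xs(4) sp l_def by auto
    ultimately show ?thesis using l_def by (intro exI[of _ l]) auto
  next
    case False
    define l where "l = xs @ [z]"
    have "walk H l" unfolding walk_def
    proof (intro allI impI)
      fix j assume j: "Suc j < length l"
      show "{l ! j, l ! Suc j} \<in> H"
      proof (cases "Suc j < length xs")
        case True
        then show ?thesis using xs(5) unfolding walk_def l_def by (simp add: nth_append)
      next
        case False
        then have "Suc j = length xs" using j l_def by simp
        moreover have "xs ! j = y"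
        proof -
          have "j = length xs - 1" using \<open>Suc j = length xs\<close> by simp
          thus ?thesis using xs(1,3) by (simp add: last_conv_nth)
        qed
        ultimately show ?thesis using yz unfolding l_def by (simp add: nth_append)
      qed
    qed
    moreover have "hd l = u" using xs(1,2) l_def by simp
    moreover have "distinct l" using xs(4) False l_def by auto
    ultimately show ?thesis using l_def by (intro exI[of _ l]) auto
  qed
qed

lemma walk_cycle:
  assumes "xs \<noteq> []" "distinct xs" "walk H xs" "3 \<le> length xs" "{last xs, hd xs} \<in> H"
  shows "is_cycle H xs"
  unfolding is_cycle_def
proof (intro conjI allI impI)
  fix i assume i: "i < length xs"
  show "{xs ! i, xs ! ((i + 1) mod length xs)} \<in> H"
  proof (cases "Suc i < length xs")
    case True
    then show ?thesis using assms(3) unfolding walk_def by simp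
  next
    case False
    then have "Suc i = length xs" using i by simp
    then have ii: "i = length xs - 1" by simp
    then have "(i + 1) mod length xs = 0" "xs ! i = last xs" "xs ! 0 = hd xs"
      using assms(1) \<open>Suc i = length xs\<close> by (auto simp: last_conv_nth hd_conv_nth)
    then show ?thesis using assms(5) by simp
  qed
qed (use assms in auto)

lemma conn_cycle:
  assumes "(u, v) \<in> (rel H)\<^sup>*" "u \<noteq> v" "{u, v} \<notin> H"
  shows "\<exists>xs. is_cycle (insert {u, v} H) xs"
proof -
  obtain xs where xs: "xs \<noteq> []" "hd xs = u" "last xs = v" "distinct xs" "walk H xs"
    using distinct_walk[OF assms(1)] by blast
  have h0: "xs ! 0 = u" using xs by (simp add: hd_conv_nth)
  have hl: "xs ! (length xs - 1) = v" using xs by (simp add: last_conv_nth)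
  have "length xs \<noteq> 1" using xs assms(2) h0 hl by auto
  moreover have "length xs \<noteq> 2"
  proof
    assume "length xs = 2"
    then have "{xs ! 0, xs ! Suc 0} \<in> H" using xs(5) unfolding walk_def by auto
    then show False using h0 hl \<open>length xs = 2\<close> assms(3) by simp
  qed
  moreover have "length xs \<noteq> 0" using xs(1) by simp
  ultimately have "3 \<le> length xs" by linarith
  moreover have "walk (insert {u, v} H) xs" using xs(5) unfolding walk_def by auto
  ultimately have "is_cycle (insert {u, v} H) xs"
    using xs by (intro walk_cycle) (auto simp: insert_commute)
  thus ?thesis by blast
qed



lemma mod_arith_aux:
  fixes i j n :: nat
  assumes "i < n" "3 \<le> n" "j = (i + 1) mod n" "(j + 1) mod n = i"
  shows False
proof (cases "i + 1 < n")
  case True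
  then have "j = i + 1" using assms by simp
  show False
  proof (cases "i + 2 < n")
    case True
    then show False using assms \<open>j = i + 1\<close> by simp
  next
    case False
    then have "i + 2 = n" using \<open>i + 1 < n\<close> by simp
    then have "(j + 1) mod n = 0" using \<open>j = i + 1\<close> by simp
    then show False using assms \<open>i + 2 = n\<close> by simp
  qed
next
  case False
  then have "i + 1 = n" using assms by simp
  then have "j = 0" using assms by simp
  then have "(j + 1) mod n = 1" using assms by simp
  then show False using assms \<open>i + 1 = n\<close> by simp
qed

lemma cycle_edge:
  assumes cyc: "is_cycle (insert {a, b} H) xs" and nc: "\<not> is_cycle H xs"
  shows "(a, b) \<in> (rel H)\<^sup>*"
proof -
  define n where "n = length xs"
  define ed where "ed j = {xs ! j, xs ! ((j + 1) mod n)}" for j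
  have n3: "3 \<le> n" and dist: "distinct xs" and edi: "\<And>i. i < n \<Longrightarrow> ed i \<in> insert {a, b} H"
    using cyc unfolding is_cycle_def n_def ed_def by auto
  obtain i where i: "i < n" "ed i \<notin> H"
    using nc n3 dist unfolding is_cycle_def n_def ed_def by auto
  have edi_ab: "ed i = {a, b}" using edi[OF i(1)] i(2) by auto
  have other: "ed j \<in> H" if j: "j < n" "j \<noteq> i" for j
  proof (rule ccontr)
    assume "ed j \<notin> H"
    then have "ed j = ed i" using edi[OF j(1)] edi_ab by auto
    then have "(xs ! j = xs ! i \<and> xs ! ((j + 1) mod n) = xs ! ((i + 1) mod n)) \<or>
               (xs ! j = xs ! ((i + 1) mod n) \<and> xs ! ((j + 1) mod n) = xs ! i)"
      unfolding ed_def by (auto simp: doubleton_eq_iff)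
    moreover have "(i + 1) mod n < n" "(j + 1) mod n < n" using n3 by auto
    ultimately have "j = i \<or> (j = (i + 1) mod n \<and> (j + 1) mod n = i)"
      using dist j(1) i(1) unfolding n_def by (auto simp: nth_eq_iff_index_eq)
    then show False using j(2) mod_arith_aux[OF i(1) n3] by blast
  qed
  have edsuc: "ed j = {xs ! j, xs ! Suc j}" if "Suc j < n" for j
    using that unfolding ed_def by simp
  have seg: "(xs ! p, xs ! q) \<in> (rel H)\<^sup>*"
    if "p \<le> q" "q < n" "\<forall>j. p \<le> j \<and> j < q \<longrightarrow> {xs ! j, xs ! Suc j} \<in> H" for p q
    using that
  proof (induction q)
    case 0 then show ?case by simp
  next
    case (Suc q)
    show ?case
    proof (cases "p = Suc q")
      case True then show ?thesis by simp
    next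
      case False
      then have "(xs ! p, xs ! q) \<in> (rel H)\<^sup>*" using Suc by auto
      moreover have "{xs ! q, xs ! Suc q} \<in> H" using Suc.prems False by auto
      ultimately show ?thesis by (auto simp: rel_def intro: rtrancl_into_rtrancl)
    qed
  qed
  have "(xs ! i, xs ! ((i + 1) mod n)) \<in> (rel H)\<^sup>*"
  proof (cases "i = n - 1")
    case True
    have "\<forall>j. 0 \<le> j \<and> j < n - 1 \<longrightarrow> {xs ! j, xs ! Suc j} \<in> H"
    proof (intro allI impI)
      fix j assume "0 \<le> j \<and> j < n - 1"
      then have "j < n" "j \<noteq> i" "Suc j < n" using True by auto
      then show "{xs ! j, xs ! Suc j} \<in> H" using other edsuc by metis
    qed
    then have "(xs ! 0, xs ! (n - 1)) \<in> (rel H)\<^sup>*"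
      using seg[of 0 "n - 1"] n3 by simp
    moreover have "(i + 1) mod n = 0" using True n3 by simp
    ultimately show ?thesis using True rel_sym by auto
  next
    case False
    then have i1: "i + 1 < n" using i(1) by simp
    have "\<forall>j. i + 1 \<le> j \<and> j < n - 1 \<longrightarrow> {xs ! j, xs ! Suc j} \<in> H"
    proof (intro allI impI)
      fix j assume "i + 1 \<le> j \<and> j < n - 1"
      then have "j < n" "j \<noteq> i" "Suc j < n" by auto
      then show "{xs ! j, xs ! Suc j} \<in> H" using other edsuc by metis
    qed
    then have "(xs ! (i + 1), xs ! (n - 1)) \<in> (rel H)\<^sup>*"
      using seg[of "i + 1" "n - 1"] i1 by simp
    moreover have "ed (n - 1) \<in> H" using other[of "n - 1"] False n3 by simp
    then have "(xs ! (n - 1), xs ! 0) \<in> (rel H)\<^sup>*" using n3 unfolding ed_def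
      by (auto simp: rel_def)
    moreover have "\<forall>j. 0 \<le> j \<and> j < i \<longrightarrow> {xs ! j, xs ! Suc j} \<in> H"
    proof (intro allI impI)
      fix j assume "0 \<le> j \<and> j < i"
      then have "j < n" "j \<noteq> i" "Suc j < n" using i1 by auto
      then show "{xs ! j, xs ! Suc j} \<in> H" using other edsuc by metis
    qed
    then have "(xs ! 0, xs ! i) \<in> (rel H)\<^sup>*"
      using seg[of 0 i] i1 by simp
    ultimately have "(xs ! (i + 1), xs ! i) \<in> (rel H)\<^sup>*" by (meson rtrancl_trans)
    then show ?thesis using i1 rel_sym by simp
  qed
  then show ?thesis using edi_ab unfolding ed_def
    by (auto simp: doubleton_eq_iff intro: rel_sym)
qed

lemma first_hub:
  assumes "(u, x) \<in> (rel (H \<union> X0))\<^sup>*" "edges_in W H" "X0 \<subseteq> hub v0 W" "v0 \<notin> W" "u \<noteq> v0"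
  shows "((u, x) \<in> (rel H)\<^sup>* \<and> x \<noteq> v0) \<or> (\<exists>w. (u, w) \<in> (rel H)\<^sup>* \<and> {w, v0} \<in> X0)"
  using assms(1)
proof (induction rule: rtrancl_induct)
  case base then show ?case using assms(5) by simp
next
  case (step y z)
  have yz: "{y, z} \<in> H \<union> X0" using step.hyps(2) by (simp add: rel_def)
  show ?case
  proof (cases "(u, y) \<in> (rel H)\<^sup>* \<and> y \<noteq> v0")
    case False then show ?thesis using step.IH by blast
  next
    case True
    show ?thesis
    proof (cases "{y, z} \<in> H")
      case True
      then have "z \<in> W" using assms(2) unfolding edges_in_def by (auto simp: doubleton_eq_iff)
      then have "z \<noteq> v0" using assms(4) by auto
      moreover have "(u, z) \<in> (rel H)\<^sup>*" using \<open>(u, y) \<in> (rel H)\<^sup>* \<and> y \<noteq> v0\<close> True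
        by (auto simp: rel_def intro: rtrancl_into_rtrancl)
      ultimately show ?thesis by blast
    next
      case False
      then have "{y, z} \<in> X0" using yz by auto
      then obtain w where "w \<in> W" "{y, z} = {w, v0}" using assms(3) unfolding hub_def by auto
      then have "z = v0" "y = w" using True assms(4) by (auto simp: doubleton_eq_iff)
      then show ?thesis using True \<open>{y, z} \<in> X0\<close> by blast
    qed
  qed
qed

lemma hub_card: "v0 \<notin> W \<Longrightarrow> card (hub v0 W) = card W"
  unfolding hub_def by (rule card_image) (auto simp: inj_on_def doubleton_eq_iff)

lemma hub_finite: "finite W \<Longrightarrow> finite (hub v0 W)"
  unfolding hub_def by simp

lemma disj: "edges_in W H \<Longrightarrow> X0 \<subseteq> hub v0 W \<Longrightarrow> v0 \<notin> W \<Longrightarrow> H \<inter> X0 = {}"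
proof -
  assume a: "edges_in W H" "X0 \<subseteq> hub v0 W" "v0 \<notin> W"
  have "\<forall>e\<in>H. v0 \<notin> e" using a(1,3) unfolding edges_in_def by auto
  moreover have "\<forall>e\<in>X0. v0 \<in> e" using a(2) unfolding hub_def by auto
  ultimately show ?thesis by blast
qed

lemma acyc_mono: "acyc (insert e H) \<Longrightarrow> acyc H"
  unfolding acyc_def is_cycle_def by blast

lemma edges_in_insert: "edges_in W (insert e H) \<Longrightarrow> edges_in W H"
  unfolding edges_in_def by blast



lemma fwd:
  assumes "finite H" "finite W" "v0 \<notin> W"
  shows "edges_in W H \<Longrightarrow> acyc H \<Longrightarrow> \<exists>X0. X0 \<subseteq> hub v0 W \<and>
     (\<forall>x\<in>W. (x, v0) \<in> (rel (H \<union> X0))\<^sup>*) \<and> card H + card X0 = card W"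
  using assms(1)
proof (induction H rule: finite_induct)
  case empty
  show ?case
  proof (intro exI conjI)
    show "hub v0 W \<subseteq> hub v0 W" by simp
    show "\<forall>x\<in>W. (x, v0) \<in> (rel ({} \<union> hub v0 W))\<^sup>*"
      unfolding hub_def by (auto intro: rel_edge)
    show "card {} + card (hub v0 W) = card W" using hub_card[OF assms(3)] by simp
  qed
next
  case (insert e H)
  obtain u v where uv: "u \<noteq> v" "u \<in> W" "v \<in> W" "e = {u, v}"
    using insert.prems(1) unfolding edges_in_def by blast
  have eH: "edges_in W H" using insert.prems(1) by (rule edges_in_insert)
  have aH: "acyc H" using insert.prems(2) by (rule acyc_mono)
  obtain X0 where X0all: "X0 \<subseteq> hub v0 W \<and> (\<forall>x\<in>W. (x, v0) \<in> (rel (H \<union> X0))\<^sup>*) \<and>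
    card H + card X0 = card W" using insert.IH[OF eH aH] by (rule exE)
  have X0: "X0 \<subseteq> hub v0 W" "\<forall>x\<in>W. (x, v0) \<in> (rel (H \<union> X0))\<^sup>*"
    "card H + card X0 = card W" using X0all by auto
  have nc: "(u, v) \<notin> (rel H)\<^sup>*"
  proof
    assume "(u, v) \<in> (rel H)\<^sup>*"
    moreover have "{u, v} \<notin> H" using insert.hyps(2) uv(4) by simp
    ultimately obtain xs where "is_cycle (insert {u, v} H) xs"
      using conn_cycle[of u v H] uv(1) by blast
    moreover have "acyc (insert {u, v} H)" using insert.prems(2) uv(4) by simp
    ultimately show False unfolding acyc_def by blast
  qed
  have uv0: "u \<noteq> v0" "v \<noteq> v0" using uv assms(3) by auto
  obtain w where w: "(u, w) \<in> (rel H)\<^sup>*" "{w, v0} \<in> X0"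
    using first_hub[OF X0(2)[rule_format, OF uv(2)] eH X0(1) assms(3) uv0(1)] by blast
  obtain w' where w': "(v, w') \<in> (rel H)\<^sup>*" "{w', v0} \<in> X0"
    using first_hub[OF X0(2)[rule_format, OF uv(3)] eH X0(1) assms(3) uv0(2)] by blast
  have ww: "w \<noteq> w'"
  proof
    assume "w = w'"
    then have "(u, v) \<in> (rel H)\<^sup>*" using w(1) w'(1) rel_sym by (metis rtrancl_trans)
    then show False using nc by simp
  qed
  have wW: "w \<in> W" "w' \<in> W" using w(2) w'(2) X0(1) assms(3) unfolding hub_def
    by (auto simp: doubleton_eq_iff)
  define X1 where "X1 = X0 - {{w, v0}}"
  define S where "S = insert e H \<union> X1"
  have fX0: "finite X0" using X0(1) hub_finite[OF assms(2)] finite_subset by blast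
  have cX1: "card X1 = card X0 - 1" unfolding X1_def using w(2) fX0 by simp
  have cX0: "card X0 \<ge> 1" using w(2) fX0 by (metis One_nat_def Suc_leI card_gt_0_iff empty_iff)
  have w'X1: "{w', v0} \<in> X1" using w'(2) ww unfolding X1_def by (auto simp: doubleton_eq_iff)
  have HS: "(x, y) \<in> (rel H)\<^sup>* \<Longrightarrow> (x, y) \<in> (rel S)\<^sup>*" for x y
    using rel_mono[of H S] unfolding S_def by blast
  have wv0: "(w, v0) \<in> (rel S)\<^sup>*"
  proof -
    have "(w, u) \<in> (rel S)\<^sup>*" using rel_sym[OF HS[OF w(1)]] .
    moreover have "(u, v) \<in> (rel S)\<^sup>*" using uv(4) unfolding S_def by (auto intro: rel_edge)
    moreover have "(v, w') \<in> (rel S)\<^sup>*" using HS[OF w'(1)] .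
    moreover have "(w', v0) \<in> (rel S)\<^sup>*" using w'X1 unfolding S_def by (auto intro: rel_edge)
    ultimately show ?thesis by (meson rtrancl_trans)
  qed
  have sub: "rel (H \<union> X0) \<subseteq> (rel S)\<^sup>*"
  proof
    fix p assume "p \<in> rel (H \<union> X0)"
    then obtain x y where p: "p = (x, y)" "{x, y} \<in> H \<union> X0" unfolding rel_def by auto
    show "p \<in> (rel S)\<^sup>*"
    proof (cases "{x, y} = {w, v0}")
      case True
      then have "(x = w \<and> y = v0) \<or> (x = v0 \<and> y = w)" by (auto simp: doubleton_eq_iff)
      then show ?thesis using wv0 rel_sym[OF wv0] p(1) by auto
    next
      case False
      then have xyS: "{x, y} \<in> S" using p(2) unfolding S_def X1_def by auto
      show ?thesis using p(1) rel_edge[OF xyS] by simp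
    qed
  qed
  have reach: "\<forall>x\<in>W. (x, v0) \<in> (rel S)\<^sup>*"
    using X0(2) rtrancl_subset_rtrancl[OF sub] by blast
  have "card (insert e H) = card H + 1" using insert.hyps by simp
  then have "card (insert e H) + card X1 = card W" using cX1 cX0 X0(3) by simp
  moreover have "X1 \<subseteq> hub v0 W" using X0(1) unfolding X1_def by blast
  ultimately show ?case using reach unfolding S_def by blast
qed

lemma acyc_empty: "acyc ({}::'a set set)"
  unfolding acyc_def is_cycle_def
proof (intro allI notI)
  fix xs :: "'a list"
  assume h: "3 \<le> length xs \<and> distinct xs \<and> (\<forall>i<length xs. {xs ! i, xs ! ((i + 1) mod length xs)} \<in> ({}::'a set set))"
  then have "0 < length xs" by linarith
  with h show False by blast
qed

lemma bwd:
  assumes "finite H" "finite W" "v0 \<notin> W"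
  shows "edges_in W H \<Longrightarrow> X0 \<subseteq> hub v0 W \<Longrightarrow> (\<forall>x\<in>W. (x, v0) \<in> (rel (H \<union> X0))\<^sup>*) \<Longrightarrow>
     card W \<le> card H + card X0 \<and> (\<not> acyc H \<longrightarrow> card W < card H + card X0)"
  using assms(1)
proof (induction H arbitrary: X0 rule: finite_induct)
  case (empty X0)
  have fX0: "finite X0" using empty.prems(2) hub_finite[OF assms(2)] finite_subset by blast
  have "hub v0 W \<subseteq> X0"
  proof
    fix e assume "e \<in> hub v0 W"
    then obtain x where x: "x \<in> W" "e = {x, v0}" unfolding hub_def by auto
    have "edges_in W {}" by (simp add: edges_in_def)
    then obtain w where w1: "(x, w) \<in> (rel {})\<^sup>*" and w2: "{w, v0} \<in> X0"
      using first_hub[of x v0 "{}" X0 W] empty.prems(2,3) x(1) assms(3) by force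
    have "x = w" using w1 by (simp add: rel_def)
    then show "e \<in> X0" using x w2 by simp
  qed
  then have "card W \<le> card X0" using hub_card[OF assms(3)] card_mono[OF fX0] by metis
  then show ?case by (simp add: acyc_empty)
next
  case (insert e H X0)
  obtain u v where uv: "u \<noteq> v" "u \<in> W" "v \<in> W" "e = {u, v}"
    using insert.prems(1) unfolding edges_in_def by blast
  have eH: "edges_in W H" using insert.prems(1) by (rule edges_in_insert)
  have fX0: "finite X0" using insert.prems(2) hub_finite[OF assms(2)] finite_subset by blast
  have cI: "card (insert e H) = card H + 1" using insert.hyps by simp
  define Ho where "Ho = H \<union> X0"
  show ?case
  proof (cases "(u, v) \<in> (rel Ho)\<^sup>*")
    case True
    have "rel (insert e H \<union> X0) \<subseteq> (rel Ho)\<^sup>*"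
    proof
      fix p assume "p \<in> rel (insert e H \<union> X0)"
      then obtain x y where p: "p = (x, y)" "{x, y} \<in> insert e H \<union> X0" unfolding rel_def by auto
      show "p \<in> (rel Ho)\<^sup>*"
      proof (cases "{x, y} = e")
        case True
        then have "(x = u \<and> y = v) \<or> (x = v \<and> y = u)" using uv(4) by (auto simp: doubleton_eq_iff)
        then show ?thesis using \<open>(u, v) \<in> (rel Ho)\<^sup>*\<close> rel_sym[OF \<open>(u, v) \<in> (rel Ho)\<^sup>*\<close>] p(1) by auto
      next
        case False
        then have xyO: "{x, y} \<in> Ho" using p(2) unfolding Ho_def by auto
        show ?thesis using p(1) rel_edge[OF xyO] by simp
      qed
    qed
    note sub = rtrancl_subset_rtrancl[OF this]
    have "\<forall>x\<in>W. (x, v0) \<in> (rel (H \<union> X0))\<^sup>*"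
      using insert.prems(3) sub unfolding Ho_def by blast
    then have "card W \<le> card H + card X0" using insert.IH[OF eH insert.prems(2)] by simp
    then show ?thesis using cI by simp
  next
    case False
    have split: "(u, x) \<in> (rel Ho)\<^sup>* \<or> (v, x) \<in> (rel Ho)\<^sup>*"
      if "(u, x) \<in> (rel (insert e H \<union> X0))\<^sup>*" for x
      using that
    proof (induction rule: rtrancl_induct)
      case base then show ?case by simp
    next
      case (step y z)
      have yz: "{y, z} \<in> insert e H \<union> X0" using step.hyps(2) by (simp add: rel_def)
      show ?case
      proof (cases "{y, z} = e")
        case True
        then have "z = u \<or> z = v" using uv(4) by (auto simp: doubleton_eq_iff)
        then show ?thesis by auto
      next
        case False
        then have "(y, z) \<in> rel Ho" using yz unfolding Ho_def rel_def by auto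
        then show ?thesis using step.IH by (meson rtrancl_into_rtrancl)
      qed
    qed
    have gen: "card W \<le> card (insert e H) + card X0 \<and>
        (\<not> acyc (insert e H) \<longrightarrow> card W < card (insert e H) + card X0)"
      if ab: "e = {a, b}" "a \<in> W" "(b, v0) \<in> (rel Ho)\<^sup>*" "(a, b) \<notin> (rel Ho)\<^sup>*" for a b
    proof -
      define X1 where "X1 = insert {a, v0} X0"
      define Ho1 where "Ho1 = H \<union> X1"
      have OO1: "(x, y) \<in> (rel Ho)\<^sup>* \<Longrightarrow> (x, y) \<in> (rel Ho1)\<^sup>*" for x y
        using rel_mono[of Ho Ho1] unfolding Ho_def Ho1_def X1_def by blast
      have ab1: "(a, b) \<in> (rel Ho1)\<^sup>*"
      proof -
        have "(a, v0) \<in> (rel Ho1)\<^sup>*" unfolding Ho1_def X1_def by (auto intro: rel_edge)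
        moreover have "(v0, b) \<in> (rel Ho1)\<^sup>*" using rel_sym[OF OO1[OF ab(3)]] .
        ultimately show ?thesis by (meson rtrancl_trans)
      qed
      have "rel (insert e H \<union> X0) \<subseteq> (rel Ho1)\<^sup>*"
      proof
        fix p assume "p \<in> rel (insert e H \<union> X0)"
        then obtain x y where p: "p = (x, y)" "{x, y} \<in> insert e H \<union> X0" unfolding rel_def by auto
        show "p \<in> (rel Ho1)\<^sup>*"
        proof (cases "{x, y} = e")
          case True
          then have "(x = a \<and> y = b) \<or> (x = b \<and> y = a)" using ab(1) by (auto simp: doubleton_eq_iff)
          then show ?thesis using ab1 rel_sym[OF ab1] p(1) by auto
        next
          case False
          then have xyO1: "{x, y} \<in> Ho1" using p(2) unfolding Ho1_def X1_def by auto
          show ?thesis using p(1) rel_edge[OF xyO1] by simp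
        qed
      qed
      note sub1 = rtrancl_subset_rtrancl[OF this]
      have r1: "\<forall>x\<in>W. (x, v0) \<in> (rel (H \<union> X1))\<^sup>*"
        using insert.prems(3) sub1 unfolding Ho1_def by blast
      have X1h: "X1 \<subseteq> hub v0 W" using insert.prems(2) ab(2) unfolding X1_def hub_def by auto
      have IH: "card W \<le> card H + card X1 \<and> (\<not> acyc H \<longrightarrow> card W < card H + card X1)"
        using insert.IH[OF eH X1h r1] .
      have cX1: "card X1 \<le> card X0 + 1" unfolding X1_def using fX0 by (simp add: card_insert_if)
      have strict: "\<not> acyc (insert e H) \<Longrightarrow> card W < card (insert e H) + card X0"
      proof -
        assume na: "\<not> acyc (insert e H)"
        show ?thesis
        proof (cases "acyc H")
          case True
          obtain xs where xs: "is_cycle (insert {a, b} H) xs" using na ab(1) unfolding acyc_def by blast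
          have "\<not> is_cycle H xs" using True unfolding acyc_def by blast
          then have abH: "(a, b) \<in> (rel H)\<^sup>*" using cycle_edge[OF xs] by simp
          have "H \<subseteq> Ho" unfolding Ho_def by blast
          then have "(a, b) \<in> (rel Ho)\<^sup>*" using rel_mono abH by metis
          then show ?thesis using ab(4) by simp
        next
          case False
          then show ?thesis using IH cX1 cI by simp
        qed
      qed
      show ?thesis using IH cX1 cI strict by simp
    qed
    have "(u, v0) \<in> (rel Ho)\<^sup>* \<or> (v, v0) \<in> (rel Ho)\<^sup>*"
      using split[OF bspec[OF insert.prems(3) uv(2)]] .
    then show ?thesis
    proof
      assume "(v, v0) \<in> (rel Ho)\<^sup>*"
      then show ?thesis using gen[OF uv(4) uv(2) _ False] by blast
    next
      assume "(u, v0) \<in> (rel Ho)\<^sup>*"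
      moreover have vu: "(v, u) \<notin> (rel Ho)\<^sup>*" using False rel_sym[of v u Ho] by blast
      moreover have evu: "e = {v, u}" using uv(4) by auto
      ultimately show ?thesis using gen[OF evu uv(3) _ vu] by blast
    qed
  qed
qed


lemma forest_acyc:
  assumes "edges_in W H" "is_forest W H"
  shows "acyc H"
  unfolding acyc_def
proof (intro allI notI)
  fix xs assume cyc: "is_cycle H xs"
  have "set xs \<subseteq> W"
  proof
    fix x assume "x \<in> set xs"
    then obtain i where i: "i < length xs" "x = xs ! i" by (auto simp: in_set_conv_nth)
    then have "{xs ! i, xs ! ((i + 1) mod length xs)} \<in> H" using cyc unfolding is_cycle_def by blast
    then obtain a b where ab: "a \<in> W" "b \<in> W" "{xs ! i, xs ! ((i + 1) mod length xs)} = {a, b}"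
      using assms(1) unfolding edges_in_def by blast
    then have "xs ! i \<in> {a, b}" by (metis insertI1)
    then show "x \<in> W" using ab i(2) by auto
  qed
  then show False using assms(2) cyc unfolding is_forest_def by blast
qed

lemma ccount_split:
  assumes "finite V" "F \<subseteq> V"
  shows "ccount c i V = ccount c i (V - F) + ccount c i F"
proof -
  have "{v \<in> V. i \<in> c v} = {v \<in> V - F. i \<in> c v} \<union> {v \<in> F. i \<in> c v}" using assms(2) by auto
  moreover have "finite {v \<in> V - F. i \<in> c v}"
    by (rule finite_subset[OF _ assms(1)]) auto
  moreover have "finite {v \<in> F. i \<in> c v}"
    by (rule finite_subset[OF _ assms(1)]) (use assms(2) in auto)
  ultimately show ?thesis unfolding ccount_def by (simp add: card_Un_disjoint disjoint_iff)
qed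

lemma ccount_ins:
  assumes "finite W" "v0 \<notin> W" "i \<in> {1..t}"
  shows "ccount (c(v0 := {1..t})) i (insert v0 W) = ccount c i W + 1"
proof -
  have "{v \<in> insert v0 W. i \<in> (c(v0 := {1..t})) v} = insert v0 {v \<in> W. i \<in> c v}"
    using assms by auto
  then show ?thesis unfolding ccount_def using assms by simp
qed

theorem lemma4:
  fixes V :: "'a set" and E :: "'a set set" and c :: "'a \<Rightarrow> nat set"
    and t :: nat and k :: "nat \<Rightarrow> nat" and v0 :: 'a
  assumes G: "simple_graph V E"
    and col: "t_colouring V t c"
    and v0: "v0 \<notin> V"
  defines "E0 \<equiv> {{v, v0} | v. v \<in> V}"
  defines "E' \<equiv> E \<union> E0"
  defines "c' \<equiv> c(v0 := {1..t})"
  shows "(\<exists>F. fair_fvs V E c t k F) \<longleftrightarrow>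
    (\<exists>X X0. X \<subseteq> V \<union> {v0} \<and> v0 \<in> X \<and> X0 \<subseteq> E0 \<and>
       (\<forall>e\<in>X0. e \<subseteq> X) \<and>
       graph_connected X (induced_edges E' (X - {v0}) \<union> X0) \<and>
       card (induced_edges E' (X - {v0}) \<union> X0) = card X - 1 \<and>
       (\<forall>i\<in>{1..t}. int (ccount c' i X) = int (ccount c i V) - int (k i) + 1))"
proof -
  have fV: "finite V" using G unfolding simple_graph_def by blast
  have Eedge: "\<And>e. e \<in> E \<Longrightarrow> \<exists>a b. a \<noteq> b \<and> a \<in> V \<and> b \<in> V \<and> e = {a, b}"
    using G unfolding simple_graph_def by blast
  have ind_W: "induced_edges E' W = induced_edges E W" if "W \<subseteq> V" for W
    using that v0 unfolding induced_edges_def E'_def E0_def by auto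
  have edW: "edges_in W (induced_edges E W)" if "W \<subseteq> V" for W
    unfolding edges_in_def induced_edges_def using Eedge by fastforce
  have fH: "finite (induced_edges E W)" if "W \<subseteq> V" for W
  proof -
    have "induced_edges E W \<subseteq> Pow W" unfolding induced_edges_def by auto
    moreover have "finite W" using that fV finite_subset by blast
    ultimately show ?thesis using finite_subset by blast
  qed
  have conn_iff: "graph_connected (insert v0 W) K \<longleftrightarrow> (\<forall>x\<in>W. (x, v0) \<in> (rel K)\<^sup>*)" for W K
  proof
    assume "graph_connected (insert v0 W) K"
    then show "\<forall>x\<in>W. (x, v0) \<in> (rel K)\<^sup>*" unfolding graph_connected_def rel_def by blast
  next
    assume r: "\<forall>x\<in>W. (x, v0) \<in> (rel K)\<^sup>*"
    have r2: "(x, v0) \<in> (rel K)\<^sup>*" if "x \<in> insert v0 W" for x using r that by auto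
    show "graph_connected (insert v0 W) K" unfolding graph_connected_def
    proof (intro ballI)
      fix x y assume "x \<in> insert v0 W" "y \<in> insert v0 W"
      then have "(x, y) \<in> (rel K)\<^sup>*" using r2 rel_sym by (meson rtrancl_trans)
      then show "(x, y) \<in> {(x, y). {x, y} \<in> K}\<^sup>*" unfolding rel_def .
    qed
  qed
  show ?thesis
  proof
    assume "\<exists>F. fair_fvs V E c t k F"
    then obtain F where F: "F \<subseteq> V" "is_forest (V - F) (induced_edges E (V - F))"
      "\<forall>i\<in>{1..t}. ccount c i F = k i" unfolding fair_fvs_def by blast
    define W where "W = V - F"
    define H where "H = induced_edges E W"
    have WV: "W \<subseteq> V" unfolding W_def by blast
    have fW: "finite W" using fV WV finite_subset by blast
    have v0W: "v0 \<notin> W" using v0 WV by blast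
    have acH: "acyc H" using forest_acyc[OF edW[OF WV]] F(2) unfolding H_def W_def by blast
    obtain X0 where X0: "X0 \<subseteq> hub v0 W" "\<forall>x\<in>W. (x, v0) \<in> (rel (H \<union> X0))\<^sup>*"
      "card H + card X0 = card W"
      using fwd[OF fH[OF WV] fW v0W edW[OF WV]] acH unfolding H_def by blast
    define X where "X = insert v0 W"
    have XW: "X - {v0} = W" unfolding X_def using v0W by auto
    have fX0: "finite X0" using X0(1) hub_finite[OF fW] finite_subset by blast
    have dj: "H \<inter> X0 = {}" using disj[OF edW[OF WV] X0(1) v0W] unfolding H_def .
    have "X \<subseteq> V \<union> {v0}" unfolding X_def using WV by blast
    moreover have "v0 \<in> X" unfolding X_def by simp
    moreover have "X0 \<subseteq> E0" using X0(1) WV unfolding hub_def E0_def by blast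
    moreover have "\<forall>e\<in>X0. e \<subseteq> X" using X0(1) unfolding hub_def X_def by blast
    moreover have "induced_edges E' (X - {v0}) = H" unfolding XW H_def using ind_W[OF WV] .
    moreover have "graph_connected X (H \<union> X0)" unfolding X_def conn_iff using X0(2) .
    moreover have "card (H \<union> X0) = card X - 1"
      using card_Un_disjoint[OF fH[OF WV] fX0] dj X0(3) fW v0W unfolding X_def H_def by simp
    moreover have "\<forall>i\<in>{1..t}. int (ccount c' i X) = int (ccount c i V) - int (k i) + 1"
    proof
      fix i assume i: "i \<in> {1..t}"
      have "ccount c' i X = ccount c i W + 1" unfolding X_def c'_def using ccount_ins[OF fW v0W i] .
      moreover have "ccount c i V = ccount c i W + ccount c i F" using ccount_split[OF fV F(1)] W_def by simp
      ultimately show "int (ccount c' i X) = int (ccount c i V) - int (k i) + 1" using F(3) i by simp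
    qed
    ultimately show "\<exists>X X0. X \<subseteq> V \<union> {v0} \<and> v0 \<in> X \<and> X0 \<subseteq> E0 \<and>
       (\<forall>e\<in>X0. e \<subseteq> X) \<and>
       graph_connected X (induced_edges E' (X - {v0}) \<union> X0) \<and>
       card (induced_edges E' (X - {v0}) \<union> X0) = card X - 1 \<and>
       (\<forall>i\<in>{1..t}. int (ccount c' i X) = int (ccount c i V) - int (k i) + 1)" by metis
  next
    assume "\<exists>X X0. X \<subseteq> V \<union> {v0} \<and> v0 \<in> X \<and> X0 \<subseteq> E0 \<and>
       (\<forall>e\<in>X0. e \<subseteq> X) \<and>
       graph_connected X (induced_edges E' (X - {v0}) \<union> X0) \<and>
       card (induced_edges E' (X - {v0}) \<union> X0) = card X - 1 \<and>
       (\<forall>i\<in>{1..t}. int (ccount c' i X) = int (ccount c i V) - int (k i) + 1)"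
    then obtain X X0 where XX: "X \<subseteq> V \<union> {v0}" "v0 \<in> X" "X0 \<subseteq> E0"
       "\<forall>e\<in>X0. e \<subseteq> X"
       "graph_connected X (induced_edges E' (X - {v0}) \<union> X0)"
       "card (induced_edges E' (X - {v0}) \<union> X0) = card X - 1"
       "\<forall>i\<in>{1..t}. int (ccount c' i X) = int (ccount c i V) - int (k i) + 1" by blast
    define W where "W = X - {v0}"
    define F where "F = V - W"
    define H where "H = induced_edges E W"
    have WV: "W \<subseteq> V" unfolding W_def using XX(1) by blast
    have VF: "V - F = W" unfolding F_def using WV by blast
    have fW: "finite W" using fV WV finite_subset by blast
    have v0W: "v0 \<notin> W" unfolding W_def by blast
    have XWi: "X = insert v0 W" unfolding W_def using XX(2) by blast
    have HE: "induced_edges E' (X - {v0}) = H" unfolding H_def W_def[symmetric] using ind_W[OF WV] .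
    have X0h: "X0 \<subseteq> hub v0 W"
    proof
      fix e assume e: "e \<in> X0"
      then obtain v where v: "v \<in> V" "e = {v, v0}" using XX(3) unfolding E0_def by blast
      then have "v \<in> W" using XX(4) e v0 unfolding W_def by auto
      then show "e \<in> hub v0 W" unfolding hub_def using v(2) by blast
    qed
    have fX0: "finite X0" using X0h hub_finite[OF fW] finite_subset by blast
    have reach: "\<forall>x\<in>W. (x, v0) \<in> (rel (H \<union> X0))\<^sup>*"
      using XX(5) HE unfolding XWi conn_iff by simp
    have dj: "H \<inter> X0 = {}" using disj[OF edW[OF WV] X0h v0W] unfolding H_def .
    have cardeq: "card H + card X0 = card W"
      using XX(6) HE card_Un_disjoint[OF fH[OF WV] fX0] dj fW v0W unfolding XWi H_def by simp
    have forest: "is_forest W H"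
    proof (rule ccontr)
      assume "\<not> is_forest W H"
      then have "\<not> acyc H" unfolding is_forest_def acyc_def by blast
      then have "card W < card H + card X0"
        using bwd[OF fH[OF WV] fW v0W edW[OF WV] X0h] reach unfolding H_def by blast
      then show False using cardeq by simp
    qed
    have "\<forall>i\<in>{1..t}. ccount c i F = k i"
    proof
      fix i assume i: "i \<in> {1..t}"
      have "ccount c' i X = ccount c i W + 1" unfolding XWi c'_def using ccount_ins[OF fW v0W i] .
      moreover have "ccount c i V = ccount c i W + ccount c i F"
        using ccount_split[OF fV, of F] VF F_def by auto
      moreover have "int (ccount c' i X) = int (ccount c i V) - int (k i) + 1" using XX(7) i by blast
      ultimately show "ccount c i F = k i" by simp
    qed
    then have "fair_fvs V E c t k F" unfolding fair_fvs_def using VF forest F_def H_def by auto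
    then show "\<exists>F. fair_fvs V E c t k F" by blast
  qed
qed

end
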